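(* Let $q$ be a prime power, $m$ a positive integer, $n=q^m-1$, and $\delta$ an integer with $2\le\delta\le q^{\lceil m/2\rceil}+1$ (and $\delta\le n$). Suppose $$\sum_{i=0}^{\lfloor(\delta+1)/2\rfloor}\binom{q^m-1}{i}(q-1)^i> q^{m\lceil(\delta-1)(1-1/q)\rceil}.$$ Then the minimum distance $d$ of $\mathcal{BCH}(n,q;\delta)$ satisfies $d\in\{\delta,\delta+1\}$. If moreover $\delta\equiv0\pmod q$, then $d=\delta+1$.
   Context: Let $\alpha$ be a primitive element of $\mathbf{F}_{q^m}$ and $n=q^m-1$; $C_x=\{xq^k\bmod n\mid k\in\mathbf{Z}\}$. For $2\le\delta\le n$, $\mathcal{BCH}(n,q;\delta)$ is the cyclic code of length $n$ over $\mathbf{F}_q$ with generator polynomial $\prod_{z\in Z}(x-\alpha^z)$, where $Z=C_1\cup\cdots\cup C_{\delta-1}$. *)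

theory Defs
  imports "HOL-Number_Theory.Number_Theory" "HOL-Computational_Algebra.Polynomial"
begin

text \<open>Cyclotomic coset C_x = { x q^k mod n | k }.  Since gcd(q,n)=1, q has finite
  multiplicative order mod n, so ranging k over nat gives the same set as k over Z.\<close>
definition cyc_coset :: "nat \<Rightarrow> nat \<Rightarrow> nat \<Rightarrow> nat set" where
  "cyc_coset q n x = {x * q ^ k mod n | k. True}"

definition primitive_elem :: "'b::field \<Rightarrow> bool" where
  "primitive_elem a \<longleftrightarrow> (\<forall>x. x \<noteq> 0 \<longrightarrow> (\<exists>k::nat. x = a ^ k))"

definition bch_defset :: "nat \<Rightarrow> nat \<Rightarrow> nat \<Rightarrow> nat set" where
  "bch_defset q n \<delta> = (\<Union>x\<in>{1..\<delta>-1}. cyc_coset q n x)"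

definition bch_gen :: "nat \<Rightarrow> nat \<Rightarrow> 'b::field \<Rightarrow> nat \<Rightarrow> 'b poly" where
  "bch_gen q n \<alpha> \<delta> = (\<Prod>z\<in>bch_defset q n \<delta>. [:- (\<alpha> ^ z), 1:])"

text \<open>The cyclic code of length n over F_q (realised as the subfield {x. x^q = x} of
  the ambient field F_(q^m)) with the given generator polynomial: all polynomials of
  degree < n with coefficients in F_q that are multiples of the generator.\<close>
definition bch_code :: "nat \<Rightarrow> nat \<Rightarrow> 'b::field \<Rightarrow> nat \<Rightarrow> 'b poly set" where
  "bch_code q n \<alpha> \<delta> = {c. degree c < n \<and> (\<forall>i. coeff c i ^ q = coeff c i)
                              \<and> bch_gen q n \<alpha> \<delta> dvd c}"

definition hweight :: "'b::zero poly \<Rightarrow> nat" where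
  "hweight c = card {i. coeff c i \<noteq> 0}"

definition min_dist :: "'b::zero poly set \<Rightarrow> nat" where
  "min_dist C = (LEAST w. \<exists>c\<in>C. c \<noteq> 0 \<and> hweight c = w)"

end

theory Submission
  imports Defs
begin

lemma char_facts:
  assumes "primepow q" "card (UNIV::'b::{field,finite} set) = q^m" "m>0"
  obtains k where "q = CHAR('b)^k" "prime CHAR('b)"
proof -
  obtain p k where pk: "prime p" "k > 0" "q = p ^ k" using assms(1) unfolding primepow_def by blast
  have cp: "prime CHAR('b)" by (rule prime_CHAR_semidom) (simp add: finite_imp_CHAR_pos)
  have "CHAR('b) dvd p ^ (k*m)" using CHAR_dvd_CARD[where 'a='b] assms(2) pk by (simp add: power_mult)
  then have "CHAR('b) dvd p" using cp prime_dvd_power by blast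
  then have "CHAR('b) = p" using cp pk(1) primes_dvd_imp_eq by blast
  then show ?thesis using that pk cp by blast
qed

lemma frob_add:
  fixes x y :: "'b::field"
  assumes "q = CHAR('b)^k" "prime CHAR('b)"
  shows "(x+y)^q = x^q + y^q"
  using freshmans_dream'[OF assms(2) assms(1)] .

lemma frob_sum:
  fixes f :: "'c \<Rightarrow> 'b::field"
  assumes "q = CHAR('b)^k" "prime CHAR('b)"
  shows "(sum f A)^q = sum (\<lambda>i. f i ^ q) A"
  using freshmans_dream_sum'[OF assms(2) assms(1)] .

lemma frob_diff:
  fixes x y :: "'b::field"
  assumes "q = CHAR('b)^k" "prime CHAR('b)"
  shows "(x-y)^q = x^q - y^q"
proof -
  have "x^q = ((x-y)+y)^q" by simp
  also have "\<dots> = (x-y)^q + y^q" by (rule frob_add[OF assms])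
  finally show ?thesis by simp
qed

lemma frob_neg:
  fixes x :: "'b::field"
  assumes "q = CHAR('b)^k" "prime CHAR('b)"
  shows "(-x)^q = - (x^q)"
  using frob_diff[OF assms, of 0 x] assms
  by (metis diff_0 power_0_left prime_gt_0_nat zero_less_power power_eq_0_iff CHAR_pos_iff
        neq0_conv)


lemma prim_facts:
  fixes \<alpha> :: "'b::{field,finite}"
  assumes prim: "primitive_elem \<alpha>" and cardU: "card (UNIV::'b set) = N + 1" and N2: "N \<ge> 2"
  shows "\<alpha> \<noteq> 0" "\<alpha> ^ N = 1" "inj_on (\<lambda>i. \<alpha> ^ i) {..<N}"
proof -
  show an: "\<alpha> \<noteq> 0"
  proof
    assume a0: "\<alpha> = 0"
    have "UNIV \<subseteq> {0, 1::'b}"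
    proof
      fix x :: 'b
      show "x \<in> {0,1}"
      proof (cases "x = 0")
        case False
        then obtain k where "x = \<alpha> ^ k" using prim unfolding primitive_elem_def by blast
        then show ?thesis using a0 by (cases k) auto
      qed simp
    qed
    then have "card (UNIV::'b set) \<le> card {0,1::'b}" by (intro card_mono) auto
    also have "\<dots> \<le> 2" by (simp add: card_insert_le_m1)
    finally show False using cardU N2 by simp
  qed
  define U where "U = UNIV - {0::'b}"
  have cU: "card U = N" unfolding U_def using cardU by (simp add: card_Diff_singleton)
  have powU: "\<alpha> ^ k \<in> U" for k using an unfolding U_def by simp
  have "\<not> inj_on (\<lambda>i. \<alpha> ^ i) {..N}"
  proof
    assume "inj_on (\<lambda>i. \<alpha> ^ i) {..N}"
    then have "card {..N} \<le> card U"
      by (rule card_inj_on_le) (use powU in auto)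
    then show False using cU by simp
  qed
  then obtain i j where ij: "i \<le> N" "j \<le> N" "i \<noteq> j" "\<alpha> ^ i = \<alpha> ^ j"
    unfolding inj_on_def by auto
  have ex: "\<exists>r>0. \<alpha> ^ r = 1"
  proof -
    { fix i j :: nat assume "i < j" "\<alpha> ^ i = \<alpha> ^ j"
      moreover have "\<alpha> ^ i * \<alpha> ^ (j - i) = \<alpha> ^ j"
        using power_add[of \<alpha> i "j-i"] \<open>i < j\<close> by simp
      ultimately have "\<alpha> ^ i * \<alpha> ^ (j - i) = \<alpha> ^ i * 1" by simp
      then have "\<alpha> ^ (j - i) = 1" using an by simp
      then have "\<exists>r>0. \<alpha> ^ r = 1" using \<open>i < j\<close> by (intro exI[of _ "j-i"]) auto }
    then show ?thesis using ij by (cases "i < j") (auto simp: neq_iff)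
  qed
  define r where "r = (LEAST r. r > 0 \<and> \<alpha> ^ r = 1)"
  have r: "r > 0" "\<alpha> ^ r = 1" using LeastI_ex[OF ex] unfolding r_def by auto
  have rmin: "\<not> (0 < s \<and> \<alpha> ^ s = 1)" if "s < r" for s
    using not_less_Least[OF that[unfolded r_def]] unfolding r_def .
  have pmod: "\<alpha> ^ k = \<alpha> ^ (k mod r)" for k
  proof -
    have "\<alpha> ^ k = \<alpha> ^ (r * (k div r) + k mod r)" by simp
    also have "\<dots> = (\<alpha> ^ r) ^ (k div r) * \<alpha> ^ (k mod r)"
      by (simp only: power_add power_mult)
    finally have "\<alpha> ^ k = (\<alpha> ^ r) ^ (k div r) * \<alpha> ^ (k mod r)" .
    then show ?thesis using r by simp
  qed
  have injr: "inj_on (\<lambda>i. \<alpha> ^ i) {..<r}"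
  proof (rule inj_onI)
    fix i j assume ij: "i \<in> {..<r}" "j \<in> {..<r}" "\<alpha> ^ i = \<alpha> ^ j"
    { fix i j :: nat assume "i < j" "j < r" "\<alpha> ^ i = \<alpha> ^ j"
      moreover have "\<alpha> ^ i * \<alpha> ^ (j - i) = \<alpha> ^ j"
        using power_add[of \<alpha> i "j-i"] \<open>i < j\<close> by simp
      ultimately have "\<alpha> ^ i * \<alpha> ^ (j - i) = \<alpha> ^ i * 1" by simp
      then have "\<alpha> ^ (j - i) = 1" using an by simp
      moreover have "j - i < r" using \<open>j < r\<close> by linarith
      ultimately have False using rmin[of "j - i"] \<open>i < j\<close> by auto }
    then show "i = j" using ij by (metis lessThan_iff linorder_neqE_nat)
  qed
  have "U \<subseteq> (\<lambda>i. \<alpha> ^ i) ` {..<r}"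
  proof
    fix x assume "x \<in> U"
    then obtain k where "x = \<alpha> ^ k" using prim unfolding primitive_elem_def U_def by blast
    then show "x \<in> (\<lambda>i. \<alpha> ^ i) ` {..<r}" using pmod[of k] r(1) by auto
  qed
  then have "N \<le> r" using cU card_mono[OF _ \<open>U \<subseteq> _\<close>] card_image[OF injr] by fastforce
  moreover have "r \<le> N"
  proof -
    have "card ((\<lambda>i. \<alpha> ^ i) ` {..<r}) \<le> card U" by (rule card_mono) (use powU in auto)
    then show ?thesis using card_image[OF injr] cU by simp
  qed
  ultimately have rN: "r = N" by simp
  show "\<alpha> ^ N = 1" using r rN by simp
  show "inj_on (\<lambda>i. \<alpha> ^ i) {..<N}" using injr rN by simp
qed


lemma card_F:
  fixes \<alpha> :: "'b::{field,finite}"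
  assumes an: "\<alpha> \<noteq> 0" and aN: "\<alpha> ^ n = 1" and inj: "inj_on (\<lambda>i. \<alpha> ^ i) {..<n}"
    and q2: "q \<ge> 2" and dv: "(q - 1) dvd n" and n0: "n > 0"
  shows "card {x::'b. x ^ q = x} = q"
proof (rule antisym)
  define P :: "'b poly" where "P = monom 1 q + [:0, -1:]"
  have dP: "degree P = q" unfolding P_def
    by (subst degree_add_eq_left) (use q2 in \<open>auto simp: degree_monom_eq\<close>)
  have P0: "P \<noteq> 0" using dP q2 by auto
  have "{x::'b. x ^ q = x} = {x. poly P x = 0}"
    unfolding P_def by (auto simp: poly_monom)
  then show "card {x::'b. x ^ q = x} \<le> q"
    using card_poly_roots_bound[OF P0] dP by simp
next
  obtain M where M: "n = (q - 1) * M" using dv by blast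
  have M0: "M > 0" using M n0 by (cases M) auto
  define S where "S = insert 0 ((\<lambda>j. \<alpha> ^ (j * M)) ` {..<q-1})"
  have injS: "inj_on (\<lambda>j. \<alpha> ^ (j * M)) {..<q-1}"
  proof (rule inj_onI)
    fix i j assume ij: "i \<in> {..<q-1}" "j \<in> {..<q-1}" "\<alpha> ^ (i * M) = \<alpha> ^ (j * M)"
    have "i * M < n" "j * M < n" using ij(1,2) M M0 by auto
    then have "i * M = j * M" using inj ij(3) unfolding inj_on_def by blast
    then show "i = j" using M0 by simp
  qed
  have "card S = Suc (q - 1)" unfolding S_def
    by (subst card_insert_disjoint) (use an injS in \<open>auto simp: card_image\<close>)
  also have "\<dots> = q" using q2 by simp
  finally have cS: "card S = q" .
  have "S \<subseteq> {x. x ^ q = x}"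
  proof
    fix x assume "x \<in> S"
    then consider "x = 0" | j where "x = \<alpha> ^ (j * M)" unfolding S_def by auto
    then show "x \<in> {x. x ^ q = x}"
    proof cases
      case 1 then show ?thesis using q2 by simp
    next
      case 2
      have "x ^ q = \<alpha> ^ (j * M * (1 + (q - 1)))" using 2 q2 by (simp add: power_mult)
      also have "\<dots> = \<alpha> ^ (j * M) * (\<alpha> ^ n) ^ j"
        by (simp add: M algebra_simps power_add flip: power_mult)
      finally show ?thesis using 2 aN by simp
    qed
  qed
  then show "q \<le> card {x::'b. x ^ q = x}" using cS card_mono[of "{x::'b. x ^ q = x}" S] by simp
qed



definition Fpolys :: "nat \<Rightarrow> nat \<Rightarrow> 'b::field poly set" where
  "Fpolys q k = {p. (\<forall>i. coeff p i ^ q = coeff p i) \<and> (\<forall>i\<ge>k. coeff p i = 0)}"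

lemma Fpolys_0: "q > 0 \<Longrightarrow> Fpolys q 0 = {0}"
  unfolding Fpolys_def by (auto intro: poly_eqI)

lemma Fpolys_Suc:
  "(Fpolys q (Suc k) :: 'b::field poly set) = (\<lambda>(a,p). pCons a p) ` ({x. x^q = x} \<times> Fpolys q k)"
proof (intro Set.set_eqI iffI)
  fix p :: "'b poly"
  assume "p \<in> Fpolys q (Suc k)"
  moreover obtain a r where pr: "p = pCons a r" by (cases p)
  ultimately have pF: "\<forall>i. coeff p i ^ q = coeff p i" "\<forall>i\<ge>Suc k. coeff p i = 0" and pr: "p = pCons a r"
    unfolding Fpolys_def by auto
  have "a^q = a" using pF(1) pr by (metis coeff_pCons_0)
  moreover have "r \<in> Fpolys q k" unfolding Fpolys_def
  proof (intro CollectI conjI allI impI)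
    fix i show "coeff r i ^ q = coeff r i" using pF(1)[rule_format, of "Suc i"] pr by simp
  next
    fix i assume "k \<le> i" then show "coeff r i = 0" using pF(2)[rule_format, of "Suc i"] pr by simp
  qed
  ultimately have "a \<in> {x. x^q = x}" "r \<in> Fpolys q k" by auto
  then show "p \<in> (\<lambda>(a,p). pCons a p) ` ({x. x^q = x} \<times> Fpolys q k)" using pr by auto
next
  fix p :: "'b poly"
  assume "p \<in> (\<lambda>(a,p). pCons a p) ` ({x. x^q = x} \<times> Fpolys q k)"
  then obtain a r where pr: "p = pCons a r" "a^q = a" "r \<in> Fpolys q k" by auto
  show "p \<in> Fpolys q (Suc k)" unfolding Fpolys_def
  proof (intro CollectI conjI allI impI)
    fix i show "coeff p i ^ q = coeff p i" using pr unfolding Fpolys_def by (cases i) auto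
  next
    fix i assume "Suc k \<le> i" then show "coeff p i = 0" using pr unfolding Fpolys_def
      by (cases i) auto
  qed
qed

lemma card_Fpolys:
  assumes "q > 0"
  shows "card (Fpolys q k :: 'b::{field,finite} poly set) = card {x::'b. x^q = x} ^ k"
proof (induction k)
  case 0 then show ?case using assms by (simp add: Fpolys_0)
next
  case (Suc k)
  have "inj_on (\<lambda>(a,p). pCons a p) ({x::'b. x^q = x} \<times> (Fpolys q k :: 'b poly set))"
    by (auto simp: inj_on_def)
  then have "card (Fpolys q (Suc k) :: 'b poly set) = card ({x::'b. x^q = x} \<times> (Fpolys q k :: 'b poly set))"
    by (simp add: Fpolys_Suc card_image)
  also have "\<dots> = card {x::'b. x^q = x} * card (Fpolys q k :: 'b poly set)"
    by (rule card_cartesian_product)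
  finally show ?case using Suc by simp
qed

lemma finite_Fpolys:
  assumes "q > 0"
  shows "finite (Fpolys q k :: 'b::{field,finite} poly set)"
proof -
  have "0 \<in> {x::'b. x^q = x}" using assms by simp
  then have "card {x::'b. x^q = x} > 0" using assms by (auto simp: card_gt_0_iff intro!: exI[of _ "0::'b"])
  then have "card (Fpolys q k :: 'b poly set) > 0" using card_Fpolys[OF assms, of k, where 'b='b] by simp
  then show ?thesis by (rule card_ge_0_finite)
qed

lemma finite_supp: "finite {i. coeff p i \<noteq> 0}"
  by (rule finite_subset[of _ "{..degree p}"]) (auto intro: le_degree)

lemma hweight_pCons:
  "hweight (pCons a p) = hweight p + (if a = 0 then 0 else 1)"
proof -
  have e: "{i. coeff (pCons a p) i \<noteq> 0} = (if a = 0 then {} else {0}) \<union> Suc ` {i. coeff p i \<noteq> 0}"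
  proof (rule Set.set_eqI)
    fix x show "x \<in> {i. coeff (pCons a p) i \<noteq> 0} \<longleftrightarrow> x \<in> (if a = 0 then {} else {0}) \<union> Suc ` {i. coeff p i \<noteq> 0}"
      by (cases x) auto
  qed
  show ?thesis unfolding hweight_def e
    by (subst card_Un_disjoint) (auto simp: finite_supp card_image)
qed

lemma hweight_0 [simp]: "hweight 0 = 0"
  unfolding hweight_def by simp

lemma choose_aux: "(k choose Suc j) * c ^ Suc j + (k choose j) * c ^ Suc j = (Suc k choose Suc j) * (c::nat) ^ Suc j"
  by (simp add: add_mult_distrib)

lemma card_weight:
  assumes q0: "q > 0"
  shows "card {p \<in> (Fpolys q k :: 'b::{field,finite} poly set). hweight p = i}
         = (k choose i) * (card {x::'b. x^q = x} - 1) ^ i"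
proof (induction k arbitrary: i)
  case 0
  have "{p::'b poly. p = 0 \<and> hweight p = 0} = {0}" by auto
  then show ?case using q0 by (cases i) (auto simp: Fpolys_0)
next
  case (Suc k)
  define F where "F = {x::'b. x^q = x}"
  have finF: "finite F" by simp
  have 0: "0 \<in> F" unfolding F_def using q0 by simp
  define A where "A = (\<lambda>p. pCons 0 p) ` {p \<in> (Fpolys q k :: 'b poly set). hweight p = i}"
  define B where "B = (\<lambda>(a,p). pCons a p) ` ((F - {0}) \<times> {p \<in> (Fpolys q k :: 'b poly set). Suc (hweight p) = i})"
  have eq: "{p \<in> (Fpolys q (Suc k) :: 'b poly set). hweight p = i} = A \<union> B"
    unfolding A_def B_def Fpolys_Suc F_def
    using q0 by (auto simp: hweight_pCons image_iff split: if_splits)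
  have dj: "A \<inter> B = {}" unfolding A_def B_def by auto
  have fA: "finite A" "finite B" unfolding A_def B_def using finite_Fpolys[OF q0, where 'b='b] finF by auto
  have cA: "card A = (k choose i) * (card F - 1) ^ i"
    unfolding A_def F_def by (subst card_image) (auto simp: inj_on_def Suc.IH q0)
  have cB: "card B = (card F - 1) * card {p \<in> (Fpolys q k :: 'b poly set). Suc (hweight p) = i}"
    unfolding B_def
    by (subst card_image) (auto simp: inj_on_def card_cartesian_product card_Diff_singleton 0 q0)
  show ?case
  proof (cases i)
    case 0
    then have "B = {}" unfolding B_def by auto
    then show ?thesis using eq cA 0 by (simp add: F_def)
  next
    case (Suc j)
    have "{p \<in> (Fpolys q k :: 'b poly set). Suc (hweight p) = i} = {p \<in> Fpolys q k. hweight p = j}"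
      using Suc by auto
    then have "card B = (card F - 1) * ((k choose j) * (card F - 1) ^ j)" using cB Suc.IH by (simp add: F_def)
    then have "card (A \<union> B) = (k choose Suc j) * (card F - 1) ^ Suc j + (k choose j) * (card F - 1) ^ Suc j"
      using card_Un_disjoint[OF fA dj] cA Suc by (simp add: algebra_simps)
    also have "\<dots> = (Suc k choose i) * (card F - 1) ^ i" using Suc choose_aux[of k j "card F - 1"] by simp
    finally show ?thesis using eq by (simp add: F_def)
  qed
qed


lemma Fpoly_mult:
  fixes a b :: "'b::field poly"
  assumes hq: "q = CHAR('b)^k" "prime CHAR('b)"
    and A: "\<forall>i. coeff a i ^ q = coeff a i" and B: "\<forall>i. coeff b i ^ q = coeff b i"
  shows "\<forall>i. coeff (a * b) i ^ q = coeff (a * b) i"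
proof
  fix i
  show "coeff (a * b) i ^ q = coeff (a * b) i"
    unfolding coeff_mult frob_sum[OF hq] by (simp add: power_mult_distrib A B)
qed

lemma hweight_diff: "hweight (a - b) \<le> hweight a + hweight b"
proof -
  have "{i. coeff (a - b) i \<noteq> 0} \<subseteq> {i. coeff a i \<noteq> 0} \<union> {i. coeff b i \<noteq> 0}" by auto
  then have "hweight (a - b) \<le> card ({i. coeff a i \<noteq> 0} \<union> {i. coeff b i \<noteq> 0})"
    unfolding hweight_def by (intro card_mono) (auto simp: finite_supp)
  also have "\<dots> \<le> hweight a + hweight b" unfolding hweight_def by (rule card_Un_le)
  finally show ?thesis .
qed

lemma card_ball:
  assumes q0: "q > 0"
  shows "card {e \<in> (Fpolys q n :: 'b::{field,finite} poly set). hweight e \<le> t}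
       = (\<Sum>i=0..t. (n choose i) * (card {x::'b. x^q = x} - 1) ^ i)"
proof -
  have "{e \<in> (Fpolys q n :: 'b poly set). hweight e \<le> t} = (\<Union>i\<in>{0..t}. {e \<in> Fpolys q n. hweight e = i})"
    by auto
  moreover have "card (\<Union>i\<in>{0..t}. {e \<in> (Fpolys q n :: 'b poly set). hweight e = i})
     = (\<Sum>i=0..t. card {e \<in> (Fpolys q n :: 'b poly set). hweight e = i})"
    by (rule card_UN_disjoint) (auto intro: finite_subset[OF _ finite_Fpolys[OF q0, of n, where 'b='b]])
  ultimately have "card {e \<in> (Fpolys q n :: 'b poly set). hweight e \<le> t}
     = (\<Sum>i=0..t. card {e \<in> (Fpolys q n :: 'b poly set). hweight e = i})" by simp
  then show ?thesis using card_weight[OF q0, where 'b='b] by simp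
qed

lemma packing:
  fixes C :: "'b::{field,finite} poly set"
  assumes hq: "q = CHAR('b)^k" "prime CHAR('b)" and q0: "q > 0"
    and CF: "C \<subseteq> Fpolys q n" and Cdiff: "\<forall>c\<in>C. \<forall>c'\<in>C. c - c' \<in> C"
    and Cw: "\<forall>c\<in>C. c \<noteq> 0 \<longrightarrow> 2 * t < hweight c"
  shows "card C * card {e \<in> (Fpolys q n :: 'b poly set). hweight e \<le> t} \<le> card (Fpolys q n :: 'b poly set)"
proof -
  define B where "B = {e \<in> (Fpolys q n :: 'b poly set). hweight e \<le> t}"
  have inj: "inj_on (\<lambda>(c,e). c + e) (C \<times> B)"
  proof (rule inj_onI, clarify)
    fix c e c' e' assume h: "c \<in> C" "e \<in> B" "c' \<in> C" "e' \<in> B" "c + e = c' + e'"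
    have "c - c' = e' - e" using h(5) by (simp add: algebra_simps)
    moreover have "hweight (e' - e) \<le> 2 * t" using hweight_diff[of e' e] h(2,4) unfolding B_def by simp
    ultimately have "c - c' = 0" using Cw Cdiff h(1,3) by (metis not_le)
    then show "c = c' \<and> e = e'" using h(5) by simp
  qed
  have img: "(\<lambda>(c,e). c + e) ` (C \<times> B) \<subseteq> Fpolys q n"
  proof clarify
    fix c e assume "c \<in> C" "e \<in> B"
    then have "c \<in> Fpolys q n" "e \<in> Fpolys q n" using CF unfolding B_def by auto
    then show "c + e \<in> Fpolys q n" unfolding Fpolys_def by (simp add: frob_add[OF hq])
  qed
  have "card (C \<times> B) \<le> card (Fpolys q n :: 'b poly set)"
    by (rule card_inj_on_le[OF inj img finite_Fpolys[OF q0]])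
  then show ?thesis unfolding B_def by (simp add: card_cartesian_product)
qed

lemma poly_supp: "poly (c::'a::comm_semiring_1 poly) x = (\<Sum>i\<in>{i. coeff c i \<noteq> 0}. coeff c i * x ^ i)"
proof -
  have "poly c x = (\<Sum>i\<le>degree c. coeff c i * x ^ i)" by (rule poly_altdef)
  also have "\<dots> = (\<Sum>i\<in>{i. coeff c i \<noteq> 0}. coeff c i * x ^ i)"
    by (rule sum.mono_neutral_right) (auto intro: le_degree)
  finally show ?thesis .
qed

lemma bch_core:
  fixes c :: "'b::field poly" and \<beta> :: 'b
  assumes inj: "inj_on (\<lambda>i. \<beta> ^ i) {i. coeff c i \<noteq> 0}" and bn: "\<beta> \<noteq> 0"
    and roots: "\<forall>j\<in>{1..w}. poly c (\<beta> ^ j) = 0" and wt: "hweight c \<le> w"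
  shows "c = 0"
proof (rule ccontr)
  assume "c \<noteq> 0"
  define S where "S = {i. coeff c i \<noteq> 0}"
  have finS: "finite S" unfolding S_def by (rule finite_supp)
  define s0 where "s0 = degree c"
  have s0: "s0 \<in> S" using \<open>c \<noteq> 0\<close> unfolding S_def s0_def by simp
  have cS: "card S \<le> w" using wt unfolding hweight_def S_def .
  have "card S > 0" using s0 finS by (auto simp: card_gt_0_iff)
  then have w1: "w \<ge> 1" using cS by linarith
  define L where "L = (\<Prod>s\<in>S-{s0}. [:-(\<beta> ^ s), 1:])"
  have dL: "degree L \<le> w - 1"
  proof -
    have "degree L \<le> (\<Sum>s\<in>S-{s0}. degree [:-(\<beta> ^ s), 1:])" unfolding L_def using degree_prod_sum_le[of "S-{s0}" "\<lambda>s. [:-(\<beta> ^ s), 1:]"] finS by (simp add: o_def)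
    also have "\<dots> = card (S - {s0})" by simp
    also have "\<dots> = card S - 1" using s0 finS by simp
    finally show ?thesis using cS by simp
  qed
  have "(\<Sum>i\<in>S. coeff c i * \<beta> ^ i * poly L (\<beta> ^ i))
      = (\<Sum>i\<in>S. \<Sum>k\<le>degree L. coeff L k * (coeff c i * (\<beta> ^ (Suc k)) ^ i))"
  proof (rule sum.cong[OF refl])
    fix i
    have pw: "\<beta> ^ i * (\<beta> ^ i) ^ k = (\<beta> ^ (Suc k)) ^ i" for k
    proof -
      have "\<beta> ^ i * (\<beta> ^ i) ^ k = (\<beta> ^ i) ^ Suc k" by simp
      also have "\<dots> = \<beta> ^ (i * Suc k)" by (simp only: power_mult)
      also have "\<dots> = (\<beta> ^ (Suc k)) ^ i" by (simp only: power_mult[symmetric] mult.commute)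
      finally show ?thesis .
    qed
    have "coeff c i * \<beta> ^ i * poly L (\<beta> ^ i) = coeff c i * \<beta> ^ i * (\<Sum>k\<le>degree L. coeff L k * (\<beta> ^ i) ^ k)"
      by (simp only: poly_altdef)
    also have "\<dots> = (\<Sum>k\<le>degree L. coeff L k * (coeff c i * (\<beta> ^ i * (\<beta> ^ i) ^ k)))"
      by (simp only: sum_distrib_left mult_ac)
    also have "\<dots> = (\<Sum>k\<le>degree L. coeff L k * (coeff c i * (\<beta> ^ (Suc k)) ^ i))"
      by (simp only: pw)
    finally show "coeff c i * \<beta> ^ i * poly L (\<beta> ^ i) = (\<Sum>k\<le>degree L. coeff L k * (coeff c i * (\<beta> ^ (Suc k)) ^ i))" .
  qed
  also have "\<dots> = (\<Sum>k\<le>degree L. coeff L k * (\<Sum>i\<in>S. coeff c i * (\<beta> ^ (Suc k)) ^ i))"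
    by (subst sum.swap) (simp only: sum_distrib_left)
  also have "\<dots> = (\<Sum>k\<le>degree L. coeff L k * poly c (\<beta> ^ (Suc k)))"
    unfolding S_def poly_supp[of c] ..
  also have "\<dots> = 0"
  proof (rule sum.neutral, rule ballI)
    fix k assume "k \<in> {..degree L}"
    then have "Suc k \<in> {1..w}" using dL w1 by auto
    then have "poly c (\<beta> ^ Suc k) = 0" using roots by blast
    then show "coeff L k * poly c (\<beta> ^ Suc k) = 0" by simp
  qed
  finally have sum0: "(\<Sum>i\<in>S. coeff c i * \<beta> ^ i * poly L (\<beta> ^ i)) = 0" .
  have "(\<Sum>i\<in>S. coeff c i * \<beta> ^ i * poly L (\<beta> ^ i)) = coeff c s0 * \<beta> ^ s0 * poly L (\<beta> ^ s0)"
  proof -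
    have "(\<Sum>i\<in>S-{s0}. coeff c i * \<beta> ^ i * poly L (\<beta> ^ i)) = 0"
    proof (rule sum.neutral, rule ballI)
      fix i assume "i \<in> S - {s0}"
      then have "poly L (\<beta> ^ i) = 0" unfolding L_def poly_prod using finS
        by (subst prod_zero_iff) auto
      then show "coeff c i * \<beta> ^ i * poly L (\<beta> ^ i) = 0" by simp
    qed
    then show ?thesis using sum.remove[OF finS s0, of "\<lambda>i. coeff c i * \<beta> ^ i * poly L (\<beta> ^ i)"] by simp
  qed
  moreover have "poly L (\<beta> ^ s0) \<noteq> 0"
  proof -
    have "\<forall>s\<in>S-{s0}. \<beta> ^ s0 - \<beta> ^ s \<noteq> 0" using inj s0 unfolding S_def inj_on_def by auto
    then show ?thesis unfolding L_def poly_prod using finS by (subst prod_zero_iff) auto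
  qed
  ultimately show False using sum0 s0 bn unfolding S_def by simp
qed

lemma coset_lt: "n > 0 \<Longrightarrow> cyc_coset q n x \<subseteq> {..<n}"
  unfolding cyc_coset_def by auto

lemma defset_lt: "n > 0 \<Longrightarrow> bch_defset q n \<delta> \<subseteq> {..<n}"
  unfolding bch_defset_def using coset_lt by blast

lemma coset_card:
  assumes "q ^ m mod n = 1" "m > 0"
  shows "card (cyc_coset q n x) \<le> m"
proof -
  have cm: "[q ^ m = 1] (mod n)" using assms(1) unfolding cong_def
    by (metis mod_mod_trivial)
  have "cyc_coset q n x \<subseteq> (\<lambda>k. x * q ^ k mod n) ` {..<m}"
  proof
    fix y assume "y \<in> cyc_coset q n x"
    then obtain k where y: "y = x * q ^ k mod n" unfolding cyc_coset_def by auto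
    have "[q ^ k = (q ^ m) ^ (k div m) * q ^ (k mod m)] (mod n)"
      by (simp add: power_mult[symmetric] power_add[symmetric])
    also have "[(q ^ m) ^ (k div m) * q ^ (k mod m) = 1 ^ (k div m) * q ^ (k mod m)] (mod n)"
      by (intro cong_mult cong_pow cm cong_refl)
    finally have "[x * q ^ k = x * q ^ (k mod m)] (mod n)" by (intro cong_mult cong_refl) simp
    then have "y = x * q ^ (k mod m) mod n" using y unfolding cong_def by simp
    then show "y \<in> (\<lambda>k. x * q ^ k mod n) ` {..<m}" using assms(2) by auto
  qed
  then have "card (cyc_coset q n x) \<le> card ((\<lambda>k. x * q ^ k mod n) ` {..<m})"
    by (intro card_mono) auto
  also have "\<dots> \<le> m" using card_image_le[of "{..<m}" "\<lambda>k. x * q ^ k mod n"] by simp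
  finally show ?thesis .
qed

lemma coset_sub:
  assumes "x = y * q ^ e"
  shows "cyc_coset q n x \<subseteq> cyc_coset q n y"
proof
  fix z assume "z \<in> cyc_coset q n x"
  then obtain k where "z = x * q ^ k mod n" unfolding cyc_coset_def by auto
  then have "z = y * q ^ (e + k) mod n" using assms by (simp add: power_add mult.assoc)
  then show "z \<in> cyc_coset q n y" unfolding cyc_coset_def by blast
qed

lemma strip_q:
  fixes q x :: nat
  assumes "q \<ge> 2"
  shows "x \<ge> 1 \<Longrightarrow> \<exists>y e. 1 \<le> y \<and> y \<le> x \<and> \<not> q dvd y \<and> x = y * q ^ e"
proof (induction x rule: less_induct)
  case (less x)
  show ?case
  proof (cases "q dvd x")
    case False then show ?thesis using less.prems by (intro exI[of _ x] exI[of _ 0]) auto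
  next
    case True
    then obtain x' where x': "x = q * x'" by blast
    have "x' \<ge> 1" using x' less.prems by (cases x') auto
    moreover have "x' < x" using x' assms \<open>x' \<ge> 1\<close> by simp
    ultimately obtain y e where "1 \<le> y" "y \<le> x'" "\<not> q dvd y" "x' = y * q ^ e"
      using less.IH by blast
    then show ?thesis using x' \<open>x' < x\<close>
      by (intro exI[of _ y] exI[of _ "Suc e"]) (auto simp: mult_ac)
  qed
qed

lemma card_nondiv:
  assumes "q > 0"
  shows "card {x\<in>{1..a::nat}. \<not> q dvd x} = a - a div q"
proof -
  define M where "M = {x\<in>{1..a}. q dvd x}"
  have M: "M = (\<lambda>j. j * q) ` {1..a div q}"
  proof (rule Set.set_eqI iffI)+
    fix x assume "x \<in> M"
    then obtain j where "x = j * q" "1 \<le> x" "x \<le> a" unfolding M_def by (auto simp: mult.commute)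
    then show "x \<in> (\<lambda>j. j * q) ` {1..a div q}" using assms
      by (auto simp: less_eq_div_iff_mult_less_eq intro!: image_eqI[of _ _ j])
  next
    fix x assume "x \<in> (\<lambda>j. j * q) ` {1..a div q}"
    then show "x \<in> M" unfolding M_def using assms
      by (auto simp: less_eq_div_iff_mult_less_eq)
  qed
  have cM: "card M = a div q" unfolding M using assms by (subst card_image) (auto simp: inj_on_def)
  have "{x\<in>{1..a::nat}. \<not> q dvd x} = {1..a} - M" unfolding M_def by auto
  moreover have "M \<subseteq> {1..a}" "finite M" unfolding M_def by auto
  ultimately show ?thesis using cM by (simp add: card_Diff_subset)
qed

lemma defset_card:
  assumes "q \<ge> 2" "q ^ m mod n = 1" "m > 0" "n > 0"
  shows "card (bch_defset q n \<delta>) \<le> m * ((\<delta> - 1) - (\<delta> - 1) div q)"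
proof -
  define T where "T = {x\<in>{1..\<delta>-1}. \<not> q dvd x}"
  have "bch_defset q n \<delta> \<subseteq> (\<Union>y\<in>T. cyc_coset q n y)"
  proof
    fix z assume "z \<in> bch_defset q n \<delta>"
    then obtain x where x: "x \<in> {1..\<delta>-1}" "z \<in> cyc_coset q n x" unfolding bch_defset_def by auto
    then obtain y e where "1 \<le> y" "y \<le> x" "\<not> q dvd y" "x = y * q ^ e"
      using strip_q[OF assms(1), of x] by auto
    moreover have "y \<le> \<delta> - 1" using \<open>y \<le> x\<close> x(1) by auto
    ultimately have "y \<in> T" "z \<in> cyc_coset q n y" using x coset_sub[of x y q e n] unfolding T_def by auto
    then show "z \<in> (\<Union>y\<in>T. cyc_coset q n y)" by blast
  qed
  then have "card (bch_defset q n \<delta>) \<le> card (\<Union>y\<in>T. cyc_coset q n y)"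
    using finite_subset[OF coset_lt[OF assms(4)]] by (intro card_mono) (auto simp: T_def)
  also have "\<dots> \<le> (\<Sum>y\<in>T. card (cyc_coset q n y))" by (rule card_UN_le) (simp add: T_def)
  also have "\<dots> \<le> (\<Sum>y\<in>T. m)" by (intro sum_mono coset_card assms)
  also have "\<dots> = m * card T" by simp
  also have "card T = (\<delta> - 1) - (\<delta> - 1) div q" unfolding T_def using assms(1) by (intro card_nondiv) simp
  finally show ?thesis .
qed

lemma ceil_bound:
  fixes a q :: nat
  assumes "q > 0"
  shows "a - a div q \<le> nat \<lceil>real a * (1 - 1 / real q)\<rceil>"
proof -
  have "real a = real q * real (a div q) + real (a mod q)"
    by (metis of_nat_add of_nat_mult div_mult_mod_eq mult.commute)
  moreover have "real (a mod q) < real q" using assms by simp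
  ultimately have "real a / real q < real (a div q) + 1" using assms
    by (simp add: field_simps)
  moreover have "a div q \<le> a" by simp
  ultimately have "real_of_int (int (a - a div q)) - 1 < real a * (1 - 1 / real q)"
    using assms by (simp add: of_nat_diff algebra_simps)
  then have "int (a - a div q) \<le> \<lceil>real a * (1 - 1 / real q)\<rceil>" by (simp only: le_ceiling_iff)
  then show ?thesis by linarith
qed

lemma fr_mult:
  fixes a b :: "'b::field poly"
  assumes hq: "q = CHAR('b)^k" "prime CHAR('b)" and q0: "q > 0"
  shows "map_poly (\<lambda>x. x^q) (a * b) = map_poly (\<lambda>x. x^q) a * map_poly (\<lambda>x. x^q) b"
proof -
  have f0: "(\<lambda>x::'b. x^q) 0 = 0" using q0 by simp
  show ?thesis
    by (rule poly_eqI) (simp add: coeff_map_poly[where f="\<lambda>x::'b. x^q", OF f0] coeff_mult frob_sum[OF hq] power_mult_distrib)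
qed

lemma fr_prod:
  fixes f :: "'c \<Rightarrow> 'b::field poly"
  assumes hq: "q = CHAR('b)^k" "prime CHAR('b)" and q0: "q > 0" and fin: "finite A"
  shows "map_poly (\<lambda>x. x^q) (\<Prod>a\<in>A. f a) = (\<Prod>a\<in>A. map_poly (\<lambda>x. x^q) (f a))"
  using fin
proof (induction A rule: finite_induct)
  case empty then show ?case by simp
next
  case (insert a A)
  then show ?case by (simp add: fr_mult[OF hq q0])
qed

lemma fr_lin:
  fixes \<beta> :: "'b::field"
  assumes hq: "q = CHAR('b)^k" "prime CHAR('b)" and q0: "q > 0"
  shows "map_poly (\<lambda>x. x^q) [:-\<beta>, 1:] = [:-(\<beta>^q), 1:]"
proof -
  have f0: "(\<lambda>x::'b. x^q) 0 = 0" using q0 by simp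
  show ?thesis by (simp add: map_poly_pCons[where f="\<lambda>x::'b. x^q", OF f0] frob_neg[OF hq])
qed

lemma pow_mod:
  fixes \<alpha> :: "'b::field"
  assumes "\<alpha> ^ n = 1"
  shows "\<alpha> ^ k = \<alpha> ^ (k mod n)"
proof -
  have "\<alpha> ^ k = \<alpha> ^ (n * (k div n) + k mod n)" by simp
  also have "\<dots> = (\<alpha> ^ n) ^ (k div n) * \<alpha> ^ (k mod n)" by (simp only: power_add power_mult)
  finally show ?thesis using assms by simp
qed

lemma gen_F:
  fixes \<alpha> :: "'b::field"
  assumes hq: "q = CHAR('b)^k" "prime CHAR('b)" and q0: "q > 0"
    and aN: "\<alpha> ^ n = 1" and n0: "n > 0" and cop: "coprime q n"
  shows "\<forall>i. coeff (bch_gen q n \<alpha> \<delta>) i ^ q = coeff (bch_gen q n \<alpha> \<delta>) i"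
proof
  fix i
  define Z where "Z = bch_defset q n \<delta>"
  define h where "h = (\<lambda>z. z * q mod n)"
  have ZL: "Z \<subseteq> {..<n}" unfolding Z_def by (rule defset_lt[OF n0])
  have finZ: "finite Z" using ZL finite_subset by blast
  have hZ: "h ` Z \<subseteq> Z"
  proof
    fix w assume "w \<in> h ` Z"
    then obtain z where z: "z \<in> Z" "w = h z" by auto
    then obtain x kk where x: "x \<in> {1..\<delta>-1}" "z = x * q ^ kk mod n"
      unfolding Z_def bch_defset_def cyc_coset_def by auto
    have "w = x * q ^ (Suc kk) mod n" using z(2) x(2) unfolding h_def
      by (simp add: mod_mult_right_eq mult_ac)
    then show "w \<in> Z" using x(1) unfolding Z_def bch_defset_def cyc_coset_def by blast
  qed
  have hinj: "inj_on h Z"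
  proof (rule inj_onI)
    fix z z' assume zz: "z \<in> Z" "z' \<in> Z" "h z = h z'"
    then have "[z * q = z' * q] (mod n)" unfolding h_def cong_def by simp
    then have "[z = z'] (mod n)" using cop by (simp add: cong_mult_rcancel_nat)
    moreover have "z < n" "z' < n" using zz(1,2) ZL by auto
    ultimately show "z = z'" by (simp add: cong_def)
  qed
  have hZe: "h ` Z = Z" by (rule endo_inj_surj[OF finZ hZ hinj])
  have "map_poly (\<lambda>x. x^q) (bch_gen q n \<alpha> \<delta>) = (\<Prod>z\<in>Z. [:-((\<alpha> ^ z)^q), 1:])"
    unfolding bch_gen_def Z_def[symmetric] by (simp add: fr_prod[OF hq q0 finZ] fr_lin[OF hq q0])
  also have "\<dots> = (\<Prod>z\<in>Z. [:-(\<alpha> ^ h z), 1:])"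
  proof (rule prod.cong[OF refl])
    fix z
    have "(\<alpha> ^ z)^q = \<alpha> ^ (z * q)" by (simp add: power_mult)
    also have "\<dots> = \<alpha> ^ h z" unfolding h_def by (rule pow_mod[OF aN])
    finally show "[:-((\<alpha> ^ z)^q), 1:] = [:-(\<alpha> ^ h z), 1:]" by simp
  qed
  also have "\<dots> = (\<Prod>w\<in>h ` Z. [:-(\<alpha> ^ w), 1:])"
    by (rule prod.reindex[OF hinj, symmetric, unfolded o_def])
  also have "\<dots> = bch_gen q n \<alpha> \<delta>" unfolding bch_gen_def Z_def[symmetric] hZe ..
  finally have "map_poly (\<lambda>x. x^q) (bch_gen q n \<alpha> \<delta>) = bch_gen q n \<alpha> \<delta>" .
  moreover have "(\<lambda>x::'b. x^q) 0 = 0" using q0 by simp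
  ultimately show "coeff (bch_gen q n \<alpha> \<delta>) i ^ q = coeff (bch_gen q n \<alpha> \<delta>) i"
    by (metis coeff_map_poly)
qed

lemma dvd_pow_minus1: "((x::nat) - 1) dvd (x ^ m - 1)"
proof (cases "x = 0")
  case True then show ?thesis by (cases m) auto
next
  case False
  show ?thesis
  proof (induction m)
    case 0 then show ?case by simp
  next
    case (Suc m)
    have "x ^ Suc m - 1 = x * (x ^ m - 1) + (x - 1)" using False
      by (simp add: algebra_simps diff_mult_distrib2)
    then show ?case using Suc.IH by simp
  qed
qed

theorem mainTheorem7:
  fixes \<alpha> :: "'b::{field,finite}" and q m \<delta> :: nat
  assumes "primepow q" and "m > 0" and "card (UNIV :: 'b set) = q ^ m"
    and "primitive_elem \<alpha>"
    and "2 \<le> \<delta>" and "\<delta> \<le> q ^ ((m + 1) div 2) + 1" and "\<delta> \<le> q ^ m - 1"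
    and "(\<Sum>i=0..(\<delta> + 1) div 2. ((q ^ m - 1) choose i) * (q - 1) ^ i)
           > q ^ (m * nat \<lceil>real (\<delta> - 1) * (1 - 1 / real q)\<rceil>)"
  shows "min_dist (bch_code q (q ^ m - 1) \<alpha> \<delta>) \<in> {\<delta>, \<delta> + 1}
    \<and> (\<delta> mod q = 0 \<longrightarrow> min_dist (bch_code q (q ^ m - 1) \<alpha> \<delta>) = \<delta> + 1)"
proof -
  define n where "n = q ^ m - 1"
  have q2: "q \<ge> 2" using primepow_gt_Suc_0[OF assms(1)] by simp
  have q0: "q > 0" using q2 by simp
  have n2: "n \<ge> 2" using assms(5,7) unfolding n_def by simp
  have qm1: "q ^ m \<ge> 1" using q0 by simp
  have qmn: "q ^ m = n + 1" unfolding n_def using qm1 by simp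
  obtain k where hq: "q = CHAR('b)^k" "prime CHAR('b)" using char_facts[OF assms(1,3,2)] by blast
  have cardU: "card (UNIV :: 'b set) = n + 1" using assms(3) qmn by simp
  note pf = prim_facts[OF assms(4) cardU n2]
  have an: "\<alpha> \<noteq> 0" and aN: "\<alpha> ^ n = 1" and ainj: "inj_on (\<lambda>i. \<alpha> ^ i) {..<n}" using pf by auto
  have dv: "(q - 1) dvd n" unfolding n_def by (rule dvd_pow_minus1)
  have cF: "card {x::'b. x ^ q = x} = q" using card_F[OF an aN ainj q2 dv] n2 by simp
  have cop: "coprime q n"
  proof (rule coprimeI)
    fix c assume c: "c dvd q" "c dvd n"
    have "q dvd q ^ m" using assms(2) by (simp add: dvd_power)
    then have "c dvd q ^ m" using c(1) by (rule dvd_trans[rotated])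
    then have "c dvd (q ^ m - n)" using c(2) by (rule dvd_diff_nat)
    then show "is_unit c" using qmn by simp
  qed
  have qmod: "q ^ m mod n = 1"
  proof -
    have "(1 + n) mod n = 1 mod n" by (rule mod_add_self2)
    then show ?thesis using qmn n2 by (simp add: add.commute)
  qed
  have n0: "n > 0" using n2 by simp
  define a where "a = \<delta> - 1"
  define Z where "Z = bch_defset q n \<delta>"
  define g :: "'b poly" where "g = bch_gen q n \<alpha> \<delta>"
  define C where "C = bch_code q n \<alpha> \<delta>"
  have ZL: "Z \<subseteq> {..<n}" unfolding Z_def by (rule defset_lt[OF n0])
  have finZ: "finite Z" using ZL finite_subset by blast
  have cZn: "card Z \<le> n" using card_mono[OF _ ZL] by simp
  have cZ: "card Z \<le> m * (a - a div q)" unfolding Z_def a_def by (rule defset_card[OF q2 qmod assms(2) n0])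
  have Zj: "j \<in> Z" if "1 \<le> j" "j \<le> \<delta> - 1" for j
  proof -
    have "j < n" using that assms(7) unfolding n_def by simp
    then have "j = j * q ^ 0 mod n" by simp
    then have "j \<in> cyc_coset q n j" unfolding cyc_coset_def by blast
    then show ?thesis using that unfolding Z_def bch_defset_def by auto
  qed
  have Zd: "\<delta> \<in> Z \<and> \<delta> < n" if qd: "q dvd \<delta>"
  proof -
    have "\<delta> \<noteq> n"
    proof
      assume "\<delta> = n"
      then have "q dvd n" using qd by simp
      moreover have "q dvd n + 1" using qmn assms(2) by (metis dvd_power)
      ultimately have "q dvd 1" by (metis dvd_add_right_iff)
      then show False using q2 by simp
    qed
    then have dn: "\<delta> < n" using assms(7) unfolding n_def by simp
    obtain d where d0: "\<delta> = q * d" using qd by (rule dvdE)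
    then have d: "\<delta> = d * q" by (simp add: mult.commute)
    have d1: "d \<ge> 1" using d assms(5) by (cases d) auto
    have "d * 2 \<le> d * q" using q2 by simp
    then have d2: "d \<le> \<delta> - 1" using d d1 by linarith
    have "\<delta> = d * q ^ 1 mod n" using d dn by simp
    then have "\<delta> \<in> cyc_coset q n d" unfolding cyc_coset_def by blast
    then have "\<delta> \<in> Z" unfolding Z_def bch_defset_def using d1 d2 by auto
    then show ?thesis using dn by simp
  qed
  have gF: "\<forall>i. coeff g i ^ q = coeff g i" unfolding g_def by (rule gen_F[OF hq q0 aN n0 cop])
  have g0: "g \<noteq> 0" unfolding g_def bch_gen_def Z_def[symmetric] using finZ by (simp add: prod_zero_iff)
  have dg: "degree g \<le> card Z" unfolding g_def bch_gen_def Z_def[symmetric]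
    using degree_prod_sum_le[OF finZ, of "\<lambda>z. [:-(\<alpha> ^ z), 1:]"] by (simp add: o_def)
  have CF: "C \<subseteq> Fpolys q n"
  proof
    fix c assume "c \<in> C"
    then have "degree c < n" "\<forall>i. coeff c i ^ q = coeff c i" unfolding C_def bch_code_def by auto
    moreover have "\<forall>i\<ge>n. coeff c i = 0"
    proof (intro allI impI)
      fix i assume "n \<le> i"
      then have "degree c < i" using \<open>degree c < n\<close> by simp
      then show "coeff c i = 0" by (rule coeff_eq_0)
    qed
    ultimately show "c \<in> Fpolys q n" unfolding Fpolys_def by simp
  qed
  have finC: "finite C" using finite_subset[OF CF finite_Fpolys[OF q0]] .
  have Cdiff: "\<forall>c\<in>C. \<forall>c'\<in>C. c - c' \<in> C"
  proof (intro ballI)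
    fix c c' assume cc: "c \<in> C" "c' \<in> C"
    then have "degree (c - c') < n" unfolding C_def bch_code_def
      using degree_diff_le_max[of c c'] by auto
    moreover have "\<forall>i. coeff (c - c') i ^ q = coeff (c - c') i" using cc
      unfolding C_def bch_code_def by (simp add: frob_diff[OF hq])
    moreover have "bch_gen q n \<alpha> \<delta> dvd c - c'" using cc unfolding C_def bch_code_def
      by (auto intro: dvd_diff)
    ultimately show "c - c' \<in> C" unfolding C_def bch_code_def by simp
  qed
  have roots: "poly c (\<alpha> ^ z) = 0" if cC: "c \<in> C" and zZ: "z \<in> Z" for c z
  proof -
    obtain r where "c = g * r" using cC unfolding C_def bch_code_def g_def by (auto elim: dvdE)
    moreover have "poly g (\<alpha> ^ z) = 0" unfolding g_def bch_gen_def Z_def[symmetric] poly_prod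
      using finZ zZ by (subst prod_zero_iff) auto
    ultimately show ?thesis by simp
  qed
  have bch: "w < hweight c" if "c \<in> C" "c \<noteq> 0" "\<forall>j\<in>{1..w}. j \<in> Z" for c w
  proof (rule ccontr)
    assume "\<not> w < hweight c"
    then have hw: "hweight c \<le> w" by simp
    have "{i. coeff c i \<noteq> 0} \<subseteq> {..<n}"
    proof
      fix i assume "i \<in> {i. coeff c i \<noteq> 0}"
      then have "i \<le> degree c" using le_degree by auto
      moreover have "degree c < n" using that(1) unfolding C_def bch_code_def by simp
      ultimately show "i \<in> {..<n}" by simp
    qed
    then have inj: "inj_on (\<lambda>i. \<alpha> ^ i) {i. coeff c i \<noteq> 0}" using ainj inj_on_subset by blast
    have "\<forall>j\<in>{1..w}. poly c (\<alpha> ^ j) = 0" using roots that(1,3) by blast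
    then have "c = 0" using bch_core[OF inj an _ hw] by blast
    then show False using that(2) by simp
  qed
  have low1: "\<delta> \<le> hweight c" if "c \<in> C" "c \<noteq> 0" for c
    using bch[OF that, of "\<delta> - 1"] Zj by auto
  have low2: "\<delta> + 1 \<le> hweight c" if "c \<in> C" "c \<noteq> 0" "q dvd \<delta>" for c
  proof -
    have "\<forall>j\<in>{1..\<delta>}. j \<in> Z" using Zj Zd[OF that(3)] by (metis atLeastAtMost_iff le_antisym Suc_pred' not_less_eq_eq assms(5) less_le_trans pos2 diff_Suc_1)
    then show ?thesis using bch[OF that(1,2), of \<delta>] by simp
  qed
  define t where "t = (\<delta> + 1) div 2"
  define V where "V = (\<Sum>i=0..t. (n choose i) * (q - 1) ^ i)"
  have Vcard: "card {e \<in> (Fpolys q n :: 'b poly set). hweight e \<le> t} = V"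
    unfolding V_def using card_ball[OF q0, of n t, where 'b='b] cF by simp
  have cFn: "card (Fpolys q n :: 'b poly set) = q ^ n" using card_Fpolys[OF q0, of n, where 'b='b] cF by simp
  define D where "D = degree g"
  have DZ: "D \<le> card Z" unfolding D_def using dg .
  have exist: "\<exists>c\<in>C. c \<noteq> 0 \<and> hweight c \<le> \<delta> + 1"
  proof (rule ccontr)
    assume "\<not> ?thesis"
    then have Cw: "\<forall>c\<in>C. c \<noteq> 0 \<longrightarrow> 2 * t < hweight c" unfolding t_def by fastforce
    have pk: "card C * V \<le> q ^ n"
      using packing[OF hq q0 CF Cdiff Cw] Vcard cFn by simp
    have sub: "(\<lambda>h. g * h) ` Fpolys q (n - D) \<subseteq> C"
    proof
      fix c assume "c \<in> (\<lambda>h. g * h) ` Fpolys q (n - D)"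
      then obtain h where h: "h \<in> Fpolys q (n - D)" "c = g * h" by auto
      have "degree c < n"
      proof (cases "h = 0")
        case True then show ?thesis using h n0 by simp
      next
        case False
        then have "coeff h (degree h) \<noteq> 0" by simp
        have "degree h < n - D"
        proof (rule ccontr)
          assume "\<not> degree h < n - D"
          then have "coeff h (degree h) = 0" using h(1) unfolding Fpolys_def by simp
          then show False using False by simp
        qed
        then show ?thesis using h(2) g0 False DZ cZn unfolding D_def by (simp add: degree_mult_eq)
      qed
      moreover have "\<forall>i. coeff c i ^ q = coeff c i"
        using Fpoly_mult[OF hq gF] h unfolding Fpolys_def by auto
      moreover have "g dvd c" using h by simp
      ultimately show "c \<in> C" unfolding C_def bch_code_def g_def by simp
    qed
    have "inj_on (\<lambda>h. g * h) (Fpolys q (n - D))" using g0 by (auto simp: inj_on_def)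
    then have "card (Fpolys q (n - D) :: 'b poly set) \<le> card C"
      using card_inj_on_le[OF _ sub finC] by blast
    then have "q ^ (n - D) \<le> card C" using card_Fpolys[OF q0, of "n - D", where 'b='b] cF by simp
    then have "q ^ (n - D) * V \<le> q ^ n" using pk by (meson le_trans mult_le_mono1)
    also have "q ^ n = q ^ (n - D) * q ^ D" using DZ cZn by (simp flip: power_add)
    finally have "V \<le> q ^ D" using q0 by simp
    also have "q ^ D \<le> q ^ (m * (a - a div q))"
      using DZ cZ q0 by (intro power_increasing) auto
    also have "\<dots> \<le> q ^ (m * nat \<lceil>real a * (1 - 1 / real q)\<rceil>)"
      using ceil_bound[OF q0, of a] q0 by (intro power_increasing) auto
    finally show False using assms(8) unfolding V_def t_def n_def a_def by simp
  qed
  define ex where "ex = (\<lambda>w. \<exists>c\<in>C. c \<noteq> 0 \<and> hweight c = w)"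
  obtain c0 where c0: "c0 \<in> C" "c0 \<noteq> 0" "hweight c0 \<le> \<delta> + 1" using exist by blast
  have md: "min_dist C = (LEAST w. ex w)" unfolding min_dist_def ex_def ..
  have exc0: "ex (hweight c0)" unfolding ex_def using c0 by blast
  have le: "min_dist C \<le> \<delta> + 1" unfolding md using Least_le[of ex, OF exc0] c0(3) by simp
  obtain c1 where c1: "c1 \<in> C" "c1 \<noteq> 0" "hweight c1 = min_dist C"
    using LeastI[of ex, OF exc0] unfolding md ex_def by blast
  have ge: "\<delta> \<le> min_dist C" using low1[OF c1(1,2)] c1(3) by simp
  have ge2: "\<delta> mod q = 0 \<longrightarrow> \<delta> + 1 \<le> min_dist C" using low2[OF c1(1,2)] c1(3) by auto
  have "min_dist C \<in> {\<delta>, \<delta> + 1} \<and> (\<delta> mod q = 0 \<longrightarrow> min_dist C = \<delta> + 1)"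
    using le ge ge2 by auto
  then show ?thesis unfolding C_def n_def .
qed

end
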